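(* Let $n\ge 2$. For $p\in(0,1)$ let $\mathfrak p$ be the geometric distribution $p_i=(1-p)p^{i-1}$, $i\in\mathbb N$, and let $d(p)$ be the Hausdorff dimension of $\Pi_{\mathfrak p}(n)=\pi_{\mathfrak p}(\{1,\dots,n\}^{\mathbb N})$. Then $d(p)$ is the unique solution $d$ of $(1-p^{dn})(1-p)^d/(1-p^d)=1$, and as $p$ ranges over $(0,1)$, $d(p)$ attains every value in $(0,1)$.
   Context: $\mathbb N=\{1,2,3,\dots\}$. For a probability distribution $\mathfrak p=(p_i)$ with all $p_i\in(0,1)$ and $\sum_i p_i=1$, set $\widehat{p_1}=0$, $\widehat{p_k}=\sum_{i=1}^{k-1}p_i$ for $k\ge2$, $T_k x=p_kx+\widehat{p_k}$, and $\pi_{\mathfrak p}((n_j))=\lim_{j\to\infty}T_{n_1}\circ\cdots\circ T_{n_j}(0)=\widehat{p_{n_1}}+\sum_{j=1}^\infty p_{n_1}\cdots p_{n_j}\widehat{p_{n_{j+1}}}$, a map $\mathbb N^{\mathbb N}\to[0,1)$. *)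

theory Defs
  imports "HOL-Analysis.Analysis"
begin

definition hausdorff_approx :: "real \<Rightarrow> real \<Rightarrow> real set \<Rightarrow> ennreal" where
  "hausdorff_approx s \<delta> E =
     (INF U \<in> {U :: nat \<Rightarrow> real set. E \<subseteq> (\<Union>i. U i) \<and>
                  (\<forall>i. bounded (U i) \<and> diameter (U i) \<le> \<delta>)}.
        (\<Sum>i. ennreal (diameter (U i) powr s)))"

definition hausdorff_measure :: "real \<Rightarrow> real set \<Rightarrow> ennreal" where
  "hausdorff_measure s E = (SUP \<delta> \<in> {0<..}. hausdorff_approx s \<delta> E)"

definition hausdorff_dim :: "real set \<Rightarrow> real" where
  "hausdorff_dim E = Inf {s. 0 \<le> s \<and> hausdorff_measure s E = 0}"

text \<open>A probability vector p is a function indexed by 1,2,3,...; a sequence in N^N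
  is a function nat => nat (index j = 0,1,2,... corresponds to n_1,n_2,...)
  with all values >= 1.\<close>

definition phat :: "(nat \<Rightarrow> real) \<Rightarrow> nat \<Rightarrow> real" where
  "phat p k = (\<Sum>i\<in>{1..<k}. p i)"

definition Tmap :: "(nat \<Rightarrow> real) \<Rightarrow> nat \<Rightarrow> real \<Rightarrow> real" where
  "Tmap p k x = p k * x + phat p k"

fun Tcomp :: "(nat \<Rightarrow> real) \<Rightarrow> (nat \<Rightarrow> nat) \<Rightarrow> nat \<Rightarrow> real \<Rightarrow> real" where
  "Tcomp p w 0 = id"
| "Tcomp p w (Suc j) = Tcomp p w j \<circ> Tmap p (w j)"

definition pi_map :: "(nat \<Rightarrow> real) \<Rightarrow> (nat \<Rightarrow> nat) \<Rightarrow> real" where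
  "pi_map p w = lim (\<lambda>j. Tcomp p w j 0)"

definition geom :: "real \<Rightarrow> nat \<Rightarrow> real" where
  "geom q i = (1 - q) * q ^ (i - 1)"

definition Pi_set :: "(nat \<Rightarrow> real) \<Rightarrow> nat \<Rightarrow> real set" where
  "Pi_set p n = pi_map p ` {w. \<forall>j. w j \<in> {1..n}}"

end

theory Submission
  imports Defs "HOL-Probability.Probability"
begin


definition PP :: "(nat \<Rightarrow> real) \<Rightarrow> (nat \<Rightarrow> nat) \<Rightarrow> nat \<Rightarrow> real" where
  "PP p w k = (\<Prod>j<k. p (w j))"
definition AA :: "(nat \<Rightarrow> real) \<Rightarrow> (nat \<Rightarrow> nat) \<Rightarrow> nat \<Rightarrow> real" where
  "AA p w k = (\<Sum>j<k. PP p w j * phat p (w j))"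

lemma PP_Suc: "PP p w (Suc k) = PP p w k * p (w k)"
  by (simp add: PP_def)
lemma AA_Suc: "AA p w (Suc k) = AA p w k + PP p w k * phat p (w k)"
  by (simp add: AA_def)
lemma PP_0[simp]: "PP p w 0 = 1" by (simp add: PP_def)
lemma AA_0[simp]: "AA p w 0 = 0" by (simp add: AA_def)

lemma Tcomp_eq: "Tcomp p w k x = AA p w k + PP p w k * x"
  by (induction k arbitrary: x) (simp_all add: Tmap_def AA_Suc PP_Suc algebra_simps)

lemma PP_cong: "(\<And>j. j < k \<Longrightarrow> w j = v j) \<Longrightarrow> PP p w k = PP p v k"
  by (simp add: PP_def)
lemma AA_cong: "(\<And>j. j < k \<Longrightarrow> w j = v j) \<Longrightarrow> AA p w k = AA p v k"
proof -
  assume h: "\<And>j. j < k \<Longrightarrow> w j = v j"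
  have "\<And>j. j \<in> {..<k} \<Longrightarrow> PP p w j * phat p (w j) = PP p v j * phat p (v j)"
  proof -
    fix j assume j: "j \<in> {..<k}"
    have "PP p w j = PP p v j" by (rule PP_cong) (use h j in auto)
    then show "PP p w j * phat p (w j) = PP p v j * phat p (v j)" using h j by simp
  qed
  then show ?thesis unfolding AA_def by (rule sum.cong[OF refl])
qed

locale setting =
  fixes p :: "nat \<Rightarrow> real" and n :: nat
  assumes pos: "\<And>i. i \<in> {1..n} \<Longrightarrow> 0 < p i"
    and S1: "(\<Sum>i=1..n. p i) < 1"
    and n1: "1 \<le> n"
begin

definition "S = (\<Sum>i=1..n. p i)"
definition "\<Omega> = {w::nat\<Rightarrow>nat. \<forall>j. w j \<in> {1..n}}"

lemma pos': "1 \<le> i \<Longrightarrow> i \<le> n \<Longrightarrow> 0 \<le> p i" using pos[of i] by auto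
lemma S_lt1: "S < 1" using S1 by (simp add: S_def)
lemma p_le_S: "i \<in> {1..n} \<Longrightarrow> p i \<le> S"
  unfolding S_def by (rule member_le_sum) (auto intro: pos')
lemma S_pos: "0 < S" using p_le_S[of 1] pos[of 1] n1 by auto
lemma p_lt1: "i \<in> {1..n} \<Longrightarrow> p i < 1" using p_le_S S_lt1 by fastforce

lemma phat_Suc: "1 \<le> i \<Longrightarrow> phat p (Suc i) = phat p i + p i"
  by (simp add: phat_def)
lemma phat_mono: "i \<le> j \<Longrightarrow> j \<le> Suc n \<Longrightarrow> phat p i \<le> phat p j"
  unfolding phat_def by (rule sum_mono2) (auto intro: pos')
lemma phat_nonneg: "j \<le> Suc n \<Longrightarrow> 0 \<le> phat p j"
  using phat_mono[of 0 j] by (simp add: phat_def)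
lemma phat_le: "i \<in> {1..n} \<Longrightarrow> phat p i + p i \<le> S"
proof -
  assume i: "i \<in> {1..n}"
  have "phat p i + p i = phat p (Suc n) - phat p (Suc n) + phat p (Suc i)" using i by (simp add: phat_Suc)
  also have "\<dots> \<le> phat p (Suc n)" using i by (simp add: phat_mono)
  also have "phat p (Suc n) = S" unfolding phat_def S_def by (rule sum.cong) auto
  finally show ?thesis .
qed

lemma PP_pos: "w \<in> \<Omega> \<Longrightarrow> 0 < PP p w k"
  unfolding PP_def \<Omega>_def by (intro prod_pos) (auto intro: pos)
lemma PP_le: "w \<in> \<Omega> \<Longrightarrow> PP p w k \<le> S ^ k"
  unfolding PP_def \<Omega>_def
  using prod_mono[of "{..<k}" "\<lambda>j. p (w j)" "\<lambda>_. S"] pos p_le_S by (auto intro: less_imp_le)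
lemma term_nonneg: "w \<in> \<Omega> \<Longrightarrow> 0 \<le> PP p w j * phat p (w j)"
proof -
  assume w: "w \<in> \<Omega>"
  then have "w j \<le> Suc n" by (auto simp: \<Omega>_def le_SucI)
  then show ?thesis using PP_pos[OF w, of j] phat_nonneg[of "w j"] by simp
qed
lemma AA_nonneg: "w \<in> \<Omega> \<Longrightarrow> 0 \<le> AA p w k"
  unfolding AA_def by (intro sum_nonneg term_nonneg)

lemma AP_dec_step: "w \<in> \<Omega> \<Longrightarrow> AA p w (Suc k) + PP p w (Suc k) \<le> AA p w k + PP p w k"
proof -
  assume w: "w \<in> \<Omega>"
  have "AA p w (Suc k) + PP p w (Suc k) = AA p w k + PP p w k * (phat p (w k) + p (w k))"
    by (simp add: AA_Suc PP_Suc algebra_simps)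
  also have "\<dots> \<le> AA p w k + PP p w k * 1"
    using phat_le[of "w k"] S_lt1 w PP_pos[OF w, of k] by (intro add_left_mono mult_left_mono) (auto simp: \<Omega>_def)
  finally show ?thesis by simp
qed

lemma AP_dec: "w \<in> \<Omega> \<Longrightarrow> m \<le> k \<Longrightarrow> AA p w k + PP p w k \<le> AA p w m + PP p w m"
proof (induction k)
  case 0 then show ?case by simp
next
  case (Suc k)
  show ?case
  proof (cases "m = Suc k")
    case False
    then have "m \<le> k" using Suc by simp
    then show ?thesis using Suc AP_dec_step[of w k] by simp
  qed simp
qed

lemma AS_step: "w \<in> \<Omega> \<Longrightarrow> AA p w k + PP p w k * S \<le> S"
proof (induction k)
  case 0 then show ?case by simp
next
  case (Suc k)
  have "AA p w (Suc k) + PP p w (Suc k) * S = AA p w k + PP p w k * (phat p (w k) + p (w k) * S)"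
    by (simp add: AA_Suc PP_Suc algebra_simps)
  also have "\<dots> \<le> AA p w k + PP p w k * S"
  proof -
    have "p (w k) * S \<le> p (w k)" using S_lt1 pos[of "w k"] Suc.prems by (auto simp: \<Omega>_def)
    then have "phat p (w k) + p (w k) * S \<le> S" using phat_le[of "w k"] Suc.prems by (auto simp: \<Omega>_def)
    then show ?thesis using PP_pos[OF Suc.prems, of k] by simp
  qed
  also have "\<dots> \<le> S" using Suc by simp
  finally show ?case .
qed

lemma term_le: "w \<in> \<Omega> \<Longrightarrow> PP p w j * phat p (w j) \<le> S ^ j"
proof -
  assume w: "w \<in> \<Omega>"
  have "phat p (w j) \<le> 1" using phat_le[of "w j"] S_lt1 pos[of "w j"] w by (auto simp: \<Omega>_def)
  then have "PP p w j * phat p (w j) \<le> PP p w j * 1" using PP_pos[OF w] by (intro mult_left_mono) (auto simp: less_imp_le)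
  then show ?thesis using PP_le[OF w, of j] by simp
qed

lemma summ: "w \<in> \<Omega> \<Longrightarrow> summable (\<lambda>j. PP p w j * phat p (w j))"
  apply (rule summable_comparison_test'[of "\<lambda>j. S ^ j"])
  using S_lt1 S_pos term_le term_nonneg by (auto intro!: summable_geometric)

lemma pi_eq: "w \<in> \<Omega> \<Longrightarrow> pi_map p w = (\<Sum>j. PP p w j * phat p (w j))"
proof -
  assume w: "w \<in> \<Omega>"
  have "(\<lambda>k. Tcomp p w k 0) = (\<lambda>k. \<Sum>j<k. PP p w j * phat p (w j))"
    by (simp add: Tcomp_eq AA_def)
  then show ?thesis unfolding pi_map_def using summable_LIMSEQ[OF summ[OF w]] by (simp add: limI)
qed

definition shiftw :: "(nat \<Rightarrow> nat) \<Rightarrow> nat \<Rightarrow> nat \<Rightarrow> nat" where "shiftw w k = (\<lambda>j. w (j + k))"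

lemma shift_in: "w \<in> \<Omega> \<Longrightarrow> shiftw w k \<in> \<Omega>" by (simp add: \<Omega>_def shiftw_def)

lemma PP_add: "PP p w (j + k) = PP p w k * PP p (shiftw w k) j"
proof (induction j)
  case (Suc j) then show ?case by (simp add: PP_Suc shiftw_def)
qed simp

lemma pi_shift: "w \<in> \<Omega> \<Longrightarrow> pi_map p w = AA p w k + PP p w k * pi_map p (shiftw w k)"
proof -
  assume w: "w \<in> \<Omega>"
  have "pi_map p w = (\<Sum>j. PP p w (j + k) * phat p (w (j + k))) + AA p w k"
    unfolding pi_eq[OF w] AA_def by (rule suminf_split_initial_segment[OF summ[OF w]])
  also have "(\<Sum>j. PP p w (j + k) * phat p (w (j + k))) = (\<Sum>j. PP p w k * (PP p (shiftw w k) j * phat p (shiftw w k j)))"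
    by (simp add: PP_add shiftw_def mult.assoc)
  also have "\<dots> = PP p w k * pi_map p (shiftw w k)"
    using pi_eq[OF shift_in[OF w]] summ[OF shift_in[OF w]] by (simp add: suminf_mult)
  finally show ?thesis by simp
qed

lemma pi_nonneg: "w \<in> \<Omega> \<Longrightarrow> 0 \<le> pi_map p w"
  using pi_eq[of w] summ[of w] term_nonneg[of w] by (simp add: suminf_nonneg)

lemma pi_le_S: "w \<in> \<Omega> \<Longrightarrow> pi_map p w \<le> S"
proof -
  assume w: "w \<in> \<Omega>"
  have "(\<lambda>k. AA p w k) \<longlonglongrightarrow> pi_map p w"
    using summable_LIMSEQ[OF summ[OF w]] pi_eq[OF w] by (simp add: AA_def)
  moreover have "\<And>k. AA p w k \<le> S"
  proof -
    fix k
    have "0 \<le> PP p w k * S" using PP_pos[OF w, of k] S_pos by simp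
    then show "AA p w k \<le> S" using AS_step[OF w, of k] by linarith
  qed
  ultimately show ?thesis using LIMSEQ_le_const2 by blast
qed

lemma pi_bounds: "w \<in> \<Omega> \<Longrightarrow> AA p w k \<le> pi_map p w \<and> pi_map p w < AA p w k + PP p w k \<and> pi_map p w \<le> AA p w k + PP p w k * S"
proof -
  assume w: "w \<in> \<Omega>"
  have a: "0 \<le> pi_map p (shiftw w k)" "pi_map p (shiftw w k) \<le> S"
    using pi_nonneg pi_le_S shift_in[OF w] by auto
  have P: "0 < PP p w k" using PP_pos[OF w] .
  have "PP p w k * pi_map p (shiftw w k) \<le> PP p w k * S" using a P by simp
  moreover have "PP p w k * S < PP p w k" using P S_lt1 by simp
  moreover have "0 \<le> PP p w k * pi_map p (shiftw w k)" using a P by simp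
  ultimately show ?thesis using pi_shift[OF w, of k] by linarith
qed

lemma disj: 
  assumes w: "w \<in> \<Omega>" and v: "v \<in> \<Omega>" and eq: "\<And>i. i < j \<Longrightarrow> w i = v i" and lt: "w j < v j"
    and k: "j < k" and m: "j < m"
  shows "AA p w k + PP p w k \<le> AA p v m"
proof -
  have "AA p w k + PP p w k \<le> AA p w (Suc j) + PP p w (Suc j)" using AP_dec[OF w] k by simp
  also have "\<dots> = AA p w j + PP p w j * phat p (Suc (w j))"
    using w by (simp add: AA_Suc PP_Suc phat_Suc \<Omega>_def algebra_simps)
  also have "\<dots> \<le> AA p v j + PP p v j * phat p (v j)"
  proof -
    have "AA p w j = AA p v j" "PP p w j = PP p v j" using eq by (intro AA_cong PP_cong; simp)+
    moreover have "phat p (Suc (w j)) \<le> phat p (v j)" using lt v by (intro phat_mono) (auto simp: \<Omega>_def le_SucI)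
    ultimately show ?thesis using PP_pos[OF w, of j] by simp
  qed
  also have "\<dots> = AA p v (Suc j)" by (simp add: AA_Suc)
  also have "\<dots> \<le> AA p v m" unfolding AA_def using m
    by (intro sum_mono2) (auto intro: term_nonneg[OF v])
  finally show ?thesis .
qed

end


context setting begin

lemma Pi_set_eq: "Pi_set p n = pi_map p ` \<Omega>"
  by (simp add: Pi_set_def \<Omega>_def)

lemma PP_pos': "(\<And>j. j < k \<Longrightarrow> u j \<in> {1..n}) \<Longrightarrow> 0 < PP p u k"
  unfolding PP_def by (intro prod_pos) (auto intro: pos)
lemma PP_le': "(\<And>j. j < k \<Longrightarrow> u j \<in> {1..n}) \<Longrightarrow> PP p u k \<le> S ^ k"
  unfolding PP_def
  using prod_mono[of "{..<k}" "\<lambda>j. p (u j)" "\<lambda>_. S"] pos p_le_S by (auto intro: less_imp_le)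

lemma sum_words:
  "(\<Sum>u\<in>PiE {..<k} (\<lambda>_. {1..n}). PP p u k powr s) = (\<Sum>i=1..n. p i powr s) ^ k"
proof -
  have "(\<Sum>u\<in>PiE {..<k} (\<lambda>_. {1..n}). PP p u k powr s)
      = (\<Sum>u\<in>PiE {..<k} (\<lambda>_. {1..n}). \<Prod>j<k. p (u j) powr s)"
    unfolding PP_def by (simp add: prod_powr_distrib)
  also have "\<dots> = (\<Prod>j<k. \<Sum>i=1..n. p i powr s)"
    by (rule prod_sum_PiE[symmetric]) auto
  also have "\<dots> = (\<Sum>i=1..n. p i powr s) ^ k" by simp
  finally show ?thesis .
qed

lemma upper_k:
  assumes Sk: "S ^ k \<le> \<delta>"
  shows "hausdorff_approx s \<delta> (Pi_set p n) \<le> ennreal ((\<Sum>i=1..n. p i powr s) ^ k)"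
proof -
  define W where "W = PiE {..<k} (\<lambda>_. {1..n::nat})"
  have fW: "finite W" unfolding W_def by (intro finite_PiE) auto
  obtain h where h: "bij_betw h {0..<card W} W" using ex_bij_betw_nat_finite[OF fW] by blast
  define U where "U j = (if j < card W then {AA p (h j) k .. AA p (h j) k + PP p (h j) k} else {})" for j
  have hW: "\<And>j. j < card W \<Longrightarrow> (\<forall>i<k. h j i \<in> {1..n})"
  proof -
    fix j assume "j < card W"
    then have "h j \<in> W" using h unfolding bij_betw_def by auto
    then show "\<forall>i<k. h j i \<in> {1..n}" unfolding W_def by (auto simp: PiE_iff)
  qed
  have cover: "Pi_set p n \<subseteq> (\<Union>j. U j)"
  proof
    fix x assume "x \<in> Pi_set p n"
    then obtain w where w: "w \<in> \<Omega>" and x: "x = pi_map p w" by (auto simp: Pi_set_eq)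
    have "restrict w {..<k} \<in> W" using w by (auto simp: W_def \<Omega>_def)
    then obtain j where j: "j < card W" "h j = restrict w {..<k}"
      using h unfolding bij_betw_def by (metis atLeastLessThan_iff imageE)
    have "AA p (h j) k = AA p w k" "PP p (h j) k = PP p w k"
      using j by (intro AA_cong PP_cong; simp)+
    then have "x \<in> U j" using j pi_bounds[OF w, of k] x by (auto simp: U_def)
    then show "x \<in> (\<Union>j. U j)" by blast
  qed
  have props: "\<forall>j. bounded (U j) \<and> diameter (U j) \<le> \<delta>"
  proof
    fix j
    show "bounded (U j) \<and> diameter (U j) \<le> \<delta>"
    proof (cases "j < card W")
      case True
      have "0 < PP p (h j) k" "PP p (h j) k \<le> S ^ k" using hW[OF True] by (auto intro: PP_pos' PP_le')
      then show ?thesis using True Sk by (simp add: U_def)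
    next
      case False
      have "0 \<le> \<delta>" using Sk S_pos by (smt (verit) zero_le_power)
      then show ?thesis using False by (simp add: U_def)
    qed
  qed
  have "hausdorff_approx s \<delta> (Pi_set p n) \<le> (\<Sum>i. ennreal (diameter (U i) powr s))"
    unfolding hausdorff_approx_def using cover props by (intro INF_lower) auto
  also have "\<dots> = (\<Sum>j\<in>{0..<card W}. ennreal (diameter (U j) powr s))"
    by (rule suminf_finite) (auto simp: U_def)
  also have "\<dots> = (\<Sum>j\<in>{0..<card W}. ennreal (PP p (h j) k powr s))"
  proof (rule sum.cong[OF refl])
    fix j assume j: "j \<in> {0..<card W}"
    have "0 < PP p (h j) k" using hW j by (auto intro: PP_pos')
    then show "ennreal (diameter (U j) powr s) = ennreal (PP p (h j) k powr s)" using j by (simp add: U_def)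
  qed
  also have "\<dots> = (\<Sum>u\<in>W. ennreal (PP p u k powr s))"
    by (rule sum.reindex_bij_betw[OF h])
  also have "\<dots> = ennreal (\<Sum>u\<in>W. PP p u k powr s)" by simp
  also have "\<dots> = ennreal ((\<Sum>i=1..n. p i powr s) ^ k)" unfolding W_def sum_words ..
  finally show ?thesis .
qed

lemma upper:
  assumes r: "(\<Sum>i=1..n. p i powr s) < 1" and \<delta>: "0 < \<delta>"
  shows "hausdorff_approx s \<delta> (Pi_set p n) = 0"
proof -
  let ?r = "(\<Sum>i=1..n. p i powr s)"
  have r0: "0 \<le> ?r" by (simp add: sum_nonneg)
  have "(\<lambda>k. S ^ k) \<longlonglongrightarrow> 0" using S_lt1 S_pos by (intro LIMSEQ_power_zero) simp
  then obtain N where N: "\<And>k. k \<ge> N \<Longrightarrow> S ^ k < \<delta>"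
    using \<delta> by (metis LIMSEQ_D diff_zero norm_power real_norm_def abs_of_pos S_pos order.strict_trans1 abs_ge_self)
  have "(\<lambda>k. ennreal (?r ^ k)) \<longlonglongrightarrow> ennreal 0"
    using r r0 by (intro tendsto_ennrealI LIMSEQ_power_zero) simp
  moreover have "\<exists>N. \<forall>k\<ge>N. hausdorff_approx s \<delta> (Pi_set p n) \<le> ennreal (?r ^ k)"
    using N upper_k by (meson less_imp_le)
  ultimately have "hausdorff_approx s \<delta> (Pi_set p n) \<le> ennreal 0" by (rule LIMSEQ_le_const)
  then show ?thesis by simp
qed

end


definition cyl :: "(nat \<Rightarrow> nat) \<Rightarrow> nat \<Rightarrow> (nat \<Rightarrow> nat) set" where
  "cyl w k = {v. \<forall>j<k. v j = w j}"

locale dsetting = setting +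
  fixes d :: real
  assumes dpos: "0 < d" and deq: "(\<Sum>i=1..n. p i powr d) = 1"
begin

definition "f i = (if i \<in> {1..n} then p i powr d else 0)"

lemma f_nonneg: "0 \<le> f i" by (simp add: f_def)
lemma f_prob: "(\<integral>\<^sup>+x. ennreal (f x) \<partial>count_space UNIV) = 1"
proof -
  have "(\<integral>\<^sup>+x. ennreal (f x) \<partial>count_space UNIV) = (\<Sum>x\<in>{1..n}. ennreal (f x))"
    by (rule nn_integral_count_space') (auto simp: f_def)
  also have "\<dots> = ennreal (\<Sum>x\<in>{1..n}. f x)" by (simp add: f_nonneg)
  also have "(\<Sum>x\<in>{1..n}. f x) = 1" using deq by (simp add: f_def)
  finally show ?thesis by simp
qed

definition "Q = embed_pmf f"
lemma pmf_Q: "pmf Q i = f i"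
  unfolding Q_def by (rule pmf_embed_pmf[OF f_nonneg f_prob])
lemma set_Q: "set_pmf Q \<subseteq> {1..n}"
proof -
  have "set_pmf Q = {x. f x \<noteq> 0}" unfolding Q_def by (rule set_embed_pmf[OF f_nonneg f_prob])
  then show ?thesis by (auto simp: f_def split: if_splits)
qed

definition "\<mu> = PiM UNIV (\<lambda>_::nat. measure_pmf Q)"

lemma space_mu[simp]: "space \<mu> = UNIV"
  by (simp add: \<mu>_def space_PiM)

lemma cyl_emb: "cyl w k = prod_emb UNIV (\<lambda>_. measure_pmf Q) {..<k} (PiE {..<k} (\<lambda>j. {w j}))"
  by (auto simp: cyl_def prod_emb_iff restrict_PiE_iff)

lemma cyl_sets[measurable]: "cyl w k \<in> sets \<mu>"
  unfolding cyl_emb \<mu>_def by (rule sets_PiM_I) auto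

lemma cyl_meas: "(\<And>j. j < k \<Longrightarrow> w j \<in> {1..n}) \<Longrightarrow> emeasure \<mu> (cyl w k) = ennreal (PP p w k powr d)"
proof -
  assume w: "\<And>j. j < k \<Longrightarrow> w j \<in> {1..n}"
  have "emeasure \<mu> (cyl w k) = (\<Prod>j<k. emeasure (measure_pmf Q) {w j})"
    unfolding cyl_emb \<mu>_def
    by (rule emeasure_PiM_emb) (auto intro: measure_pmf.prob_space_axioms)
  also have "\<dots> = (\<Prod>j<k. ennreal (p (w j) powr d))"
    using w by (intro prod.cong refl) (simp add: emeasure_pmf_single pmf_Q f_def)
  also have "\<dots> = ennreal (\<Prod>j<k. p (w j) powr d)" by (simp add: prod_ennreal)
  also have "(\<Prod>j<k. p (w j) powr d) = PP p w k powr d" unfolding PP_def by (simp add: prod_powr_distrib)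
  finally show ?thesis .
qed

lemma mu_UNIV: "emeasure \<mu> UNIV = 1"
proof -
  have "emeasure \<mu> (cyl (\<lambda>_. 1) 0) = 1" using cyl_meas[of 0 "\<lambda>_. 1"] by simp
  moreover have "cyl (\<lambda>_. 1) 0 = UNIV" by (simp add: cyl_def)
  ultimately show ?thesis by simp
qed

lemma mu_bad: "emeasure \<mu> (UNIV - \<Omega>) = 0"
proof -
  define B :: "nat \<Rightarrow> (nat \<Rightarrow> nat) set" where "B j = prod_emb UNIV (\<lambda>_. measure_pmf Q) {j} (PiE {j} (\<lambda>_. - {1..n}))" for j
  have B: "B j = {v. v j \<notin> {1..n}}" for j by (auto simp: B_def prod_emb_iff restrict_PiE_iff)
  have Bs: "B j \<in> sets \<mu>" for j unfolding B_def \<mu>_def by (rule sets_PiM_I) auto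
  have B0: "emeasure \<mu> (B j) = 0" for j
  proof -
    have "emeasure \<mu> (B j) = (\<Prod>i\<in>{j}. emeasure (measure_pmf Q) (- {1..n}))"
      unfolding B_def \<mu>_def by (rule emeasure_PiM_emb) (auto intro: measure_pmf.prob_space_axioms)
    also have "\<dots> = emeasure (measure_pmf Q) (- {1..n})" by simp
    also have "\<dots> = 0" using set_Q
      by (simp add: measure_pmf.emeasure_eq_measure measure_pmf_zero_iff) blast
    finally show ?thesis .
  qed
  have "UNIV - \<Omega> = (\<Union>j. B j)" by (auto simp: B \<Omega>_def)
  then have "emeasure \<mu> (UNIV - \<Omega>) \<le> (\<Sum>j. emeasure \<mu> (B j))"
    using emeasure_subadditive_countably[of B \<mu>] Bs by auto
  then show ?thesis using B0 by simp
qed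

end


context setting begin

lemma Sk_small: "0 < L \<Longrightarrow> \<exists>k. S ^ k < L"
proof -
  assume L: "0 < L"
  have "(\<lambda>k. S ^ k) \<longlonglongrightarrow> 0" using S_lt1 S_pos by (intro LIMSEQ_power_zero) simp
  then have "eventually (\<lambda>k. S ^ k < L) sequentially" using L by (rule order_tendstoD(2))
  then show ?thesis by (auto simp: eventually_sequentially)
qed

definition "\<rho> = Min (p ` {1..n})"
lemma rho_pos: "0 < \<rho>" unfolding \<rho>_def using n1 by (subst Min_gr_iff) (auto intro: pos)
lemma rho_le: "i \<in> {1..n} \<Longrightarrow> \<rho> \<le> p i" unfolding \<rho>_def by (intro Min_le) auto

definition "kap L w = (LEAST k. PP p w k \<le> L)"

lemma kap_ex: "w \<in> \<Omega> \<Longrightarrow> 0 < L \<Longrightarrow> \<exists>k. PP p w k \<le> L"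
  using Sk_small PP_le by (meson less_le_trans less_imp_le order_trans)
lemma kap_le: "w \<in> \<Omega> \<Longrightarrow> 0 < L \<Longrightarrow> PP p w (kap L w) \<le> L"
  unfolding kap_def using kap_ex by (rule LeastI_ex)
lemma kap_min: "PP p w k \<le> L \<Longrightarrow> kap L w \<le> k"
  unfolding kap_def by (rule Least_le)
lemma kap_big: assumes w: "w \<in> \<Omega>" and L: "0 < L" "L < 1" shows "\<rho> * L < PP p w (kap L w)"
proof (cases "kap L w")
  case 0
  then show ?thesis using kap_le[OF w L(1)] L by simp
next
  case (Suc m)
  have "\<not> PP p w m \<le> L" using Suc kap_min[of w m L] by auto
  then have "L < PP p w m" by simp
  moreover have "\<rho> \<le> p (w m)" using w rho_le by (auto simp: \<Omega>_def)
  ultimately have "L * \<rho> < PP p w m * p (w m)" using rho_pos L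
    by (intro mult_less_le_imp_less) auto
  then show ?thesis using Suc by (simp add: PP_Suc mult.commute)
qed

lemma sep:
  assumes w: "w \<in> \<Omega>" and v: "v \<in> \<Omega>" and L: "0 < L"
    and ne: "cyl w (kap L w) \<noteq> cyl v (kap L v)"
  shows "AA p w (kap L w) + PP p w (kap L w) \<le> AA p v (kap L v)
       \<or> AA p v (kap L v) + PP p v (kap L v) \<le> AA p w (kap L w)"
proof -
  let ?a = "kap L w" and ?b = "kap L v"
  have "\<exists>j. j < min ?a ?b \<and> w j \<noteq> v j"
  proof (rule ccontr)
    assume "\<not> ?thesis"
    then have agree: "\<And>j. j < min ?a ?b \<Longrightarrow> w j = v j" by auto
    have "?a = ?b"
    proof (cases "?a \<le> ?b")
      case True
      have "PP p v ?a = PP p w ?a" using agree True by (intro PP_cong) auto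
      then have "?b \<le> ?a" using kap_le[OF w L] kap_min[of v ?a L] by simp
      then show ?thesis using True by simp
    next
      case False
      have "PP p w ?b = PP p v ?b" using agree False by (intro PP_cong) auto
      then have "?a \<le> ?b" using kap_le[OF v L] kap_min[of w ?b L] by simp
      then show ?thesis using False by simp
    qed
    then have "cyl w ?a = cyl v ?b" using agree by (auto simp: cyl_def)
    then show False using ne by simp
  qed
  then obtain j where j: "j < min ?a ?b" "w j \<noteq> v j" "\<forall>i<j. \<not> (i < min ?a ?b \<and> w i \<noteq> v i)"
    using exists_least_iff[of "\<lambda>j. j < min ?a ?b \<and> w j \<noteq> v j"] by blast
  have eq: "\<And>i. i < j \<Longrightarrow> w i = v i" using j by auto
  show ?thesis
  proof (cases "w j < v j")
    case True
    then show ?thesis using disj[OF w v eq True] j by auto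
  next
    case False
    then have "v j < w j" using j by auto
    then show ?thesis using disj[OF v w _ , of j] eq j by (metis min_less_iff_conj)
  qed
qed

lemma count:
  fixes x0 :: real
  assumes L: "0 < L" "L < 1"
  defines "CY \<equiv> {cyl w (kap L w) | w. w \<in> \<Omega> \<and> \<bar>pi_map p w - x0\<bar> \<le> L}"
  shows "finite CY \<and> real (card CY) \<le> 4 / \<rho>"
proof -
  define G where "G = {w. w \<in> \<Omega> \<and> \<bar>pi_map p w - x0\<bar> \<le> L}"
  have CY: "CY = (\<lambda>w. cyl w (kap L w)) ` G" unfolding CY_def G_def by auto
  have bd: "card F \<le> nat \<lfloor>4 / \<rho>\<rfloor>" if F: "F \<subseteq> CY" "finite F" for F
  proof -
    define rep where "rep c = (SOME w. w \<in> G \<and> c = cyl w (kap L w))" for c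
    have rep: "rep c \<in> G \<and> c = cyl (rep c) (kap L (rep c))" if "c \<in> CY" for c
    proof -
      have "\<exists>w. w \<in> G \<and> c = cyl w (kap L w)" using that CY by auto
      then show ?thesis unfolding rep_def by (rule someI_ex)
    qed
    define a where "a c = AA p (rep c) (kap L (rep c))" for c
    define l where "l c = PP p (rep c) (kap L (rep c))" for c
    define J where "J c = {a c ..< a c + l c}" for c
    have repO: "rep c \<in> \<Omega>" "\<bar>pi_map p (rep c) - x0\<bar> \<le> L" if "c \<in> F" for c
      using rep[of c] that F by (auto simp: G_def)
    have lpos: "\<rho> * L < l c" if "c \<in> F" for c
      unfolding l_def using kap_big[OF repO(1)[OF that] L] .
    have lleL: "l c \<le> L" if "c \<in> F" for c
      unfolding l_def using kap_le[OF repO(1)[OF that] L(1)] .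
    have sub: "J c \<subseteq> {x0 - 2 * L ..< x0 + 2 * L}" if "c \<in> F" for c
    proof -
      have "a c \<le> pi_map p (rep c)" "pi_map p (rep c) < a c + l c"
        using pi_bounds[OF repO(1)[OF that]] by (auto simp: a_def l_def)
      then show ?thesis using repO(2)[OF that] lleL[OF that] by (auto simp: J_def)
    qed
    have disjF: "disjoint_family_on J F"
      unfolding disjoint_family_on_def
    proof (intro ballI impI)
      fix c c' assume c: "c \<in> F" "c' \<in> F" "c \<noteq> c'"
      have "cyl (rep c) (kap L (rep c)) \<noteq> cyl (rep c') (kap L (rep c'))"
        using rep[of c] rep[of c'] c F by auto
      then have "a c + l c \<le> a c' \<or> a c' + l c' \<le> a c"
        using sep[OF repO(1)[OF c(1)] repO(1)[OF c(2)] L(1)] by (simp add: a_def l_def)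
      then show "J c \<inter> J c' = {}" by (auto simp: J_def)
    qed
    have "(\<Sum>c\<in>F. emeasure lborel (J c)) = emeasure lborel (\<Union>c\<in>F. J c)"
      by (rule sum_emeasure[OF _ disjF F(2)]) (auto simp: J_def)
    also have "\<dots> \<le> emeasure lborel {x0 - 2 * L ..< x0 + 2 * L}"
      using sub by (intro emeasure_mono) auto
    also have "\<dots> = ennreal (4 * L)" using L by simp
    finally have "(\<Sum>c\<in>F. emeasure lborel (J c)) \<le> ennreal (4 * L)" .
    moreover have "(\<Sum>c\<in>F. emeasure lborel (J c)) = ennreal (\<Sum>c\<in>F. l c)"
    proof -
      have "(\<Sum>c\<in>F. emeasure lborel (J c)) = (\<Sum>c\<in>F. ennreal (l c))"
      proof (rule sum.cong[OF refl])
        fix c assume c: "c \<in> F"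
        have "0 < \<rho> * L" using rho_pos L by simp
        then have "0 \<le> l c" using lpos[OF c] by linarith
        then show "emeasure lborel (J c) = ennreal (l c)" by (simp add: J_def)
      qed
      also have "\<dots> = ennreal (\<Sum>c\<in>F. l c)"
        using lpos rho_pos L by (intro sum_ennreal) (smt (verit) mult_pos_pos)
      finally show ?thesis .
    qed
    ultimately have "(\<Sum>c\<in>F. l c) \<le> 4 * L" using L by simp
    moreover have "real (card F) * (\<rho> * L) \<le> (\<Sum>c\<in>F. l c)"
      using sum_mono[of F "\<lambda>_. \<rho> * L" l] lpos by (simp add: less_imp_le)
    ultimately have "real (card F) * (\<rho> * L) \<le> 4 * L" by linarith
    then have "real (card F) * \<rho> \<le> 4" using L by (simp add: mult.assoc[symmetric])
    then have "real (card F) \<le> 4 / \<rho>" using rho_pos by (simp add: pos_le_divide_eq)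
    then show "card F \<le> nat \<lfloor>4 / \<rho>\<rfloor>" by (simp add: le_nat_floor)
  qed
  then have "finite CY \<and> card CY \<le> nat \<lfloor>4 / \<rho>\<rfloor>" by (intro finite_if_finite_subsets_card_bdd) auto
  moreover have "real (nat \<lfloor>4 / \<rho>\<rfloor>) \<le> 4 / \<rho>" using rho_pos by simp
  ultimately show ?thesis by (meson of_nat_le_iff order_trans)
qed

end


context dsetting begin

lemma cov:
  assumes U: "bounded U" "diameter U \<le> L" and L: "0 < L" "L < 1"
  shows "\<exists>C \<in> sets \<mu>. {w\<in>\<Omega>. pi_map p w \<in> U} \<subseteq> C \<and> emeasure \<mu> C \<le> ennreal (4 / \<rho> * L powr d)"
proof (cases "U = {}")
  case True
  then show ?thesis by (intro bexI[of _ "{}"]) auto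
next
  case False
  then obtain x0 where x0: "x0 \<in> U" by blast
  define CY where "CY = {cyl w (kap L w) | w. w \<in> \<Omega> \<and> \<bar>pi_map p w - x0\<bar> \<le> L}"
  have cnt: "finite CY" "real (card CY) \<le> 4 / \<rho>" using count[OF L, of x0] unfolding CY_def by auto
  have CYs: "CY \<subseteq> sets \<mu>" unfolding CY_def by auto
  have Cs: "\<Union>CY \<in> sets \<mu>" using cnt CYs by auto
  have sub: "{w\<in>\<Omega>. pi_map p w \<in> U} \<subseteq> \<Union>CY"
  proof
    fix w assume w: "w \<in> {w\<in>\<Omega>. pi_map p w \<in> U}"
    have "dist (pi_map p w) x0 \<le> diameter U" using w x0 U by (intro diameter_bounded_bound) auto
    then have "\<bar>pi_map p w - x0\<bar> \<le> L" using U by (simp add: dist_real_def)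
    then have "cyl w (kap L w) \<in> CY" using w unfolding CY_def by auto
    moreover have "w \<in> cyl w (kap L w)" by (simp add: cyl_def)
    ultimately show "w \<in> \<Union>CY" by blast
  qed
  have each: "emeasure \<mu> c \<le> ennreal (L powr d)" if c: "c \<in> CY" for c
  proof -
    obtain w where w: "w \<in> \<Omega>" "c = cyl w (kap L w)" using c unfolding CY_def by auto
    have "emeasure \<mu> c = ennreal (PP p w (kap L w) powr d)"
      using w by (simp add: cyl_meas \<Omega>_def)
    also have "\<dots> \<le> ennreal (L powr d)"
      using kap_le[OF w(1) L(1)] PP_pos[OF w(1)] dpos by (intro ennreal_leI powr_mono2) (auto intro: less_imp_le)
    finally show ?thesis .
  qed
  have "emeasure \<mu> (\<Union>CY) = emeasure \<mu> (\<Union>c\<in>CY. c)" by simp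
  also have "\<dots> \<le> (\<Sum>c\<in>CY. emeasure \<mu> c)"
    using emeasure_subadditive_finite[of CY "\<lambda>c. c" \<mu>] cnt CYs by auto
  also have "\<dots> \<le> of_nat (card CY) * ennreal (L powr d)"
    using each by (rule sum_bounded_above)
  also have "\<dots> = ennreal (real (card CY) * L powr d)" by (simp add: ennreal_mult ennreal_of_nat_eq_real_of_nat)
  also have "\<dots> \<le> ennreal (4 / \<rho> * L powr d)"
    using cnt by (intro ennreal_leI mult_right_mono) auto
  finally show ?thesis using Cs sub by blast
qed

lemma lower:
  assumes cover: "Pi_set p n \<subseteq> (\<Union>i. U i)" and props: "\<And>i. bounded (U i) \<and> diameter (U i) \<le> 1/2"
  shows "ennreal (\<rho> / 4) \<le> (\<Sum>i. ennreal (diameter (U i) powr d))"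
proof -
  define K where "K = 4 / \<rho>"
  have K: "0 < K" unfolding K_def using rho_pos by simp
  define \<Sigma> where "\<Sigma> = (\<Sum>i. ennreal (diameter (U i) powr d))"
  have main: "1 \<le> ennreal K * \<Sigma> + ennreal (K * \<epsilon>)" if \<epsilon>: "0 < \<epsilon>" "\<epsilon> \<le> 1/2" for \<epsilon>
  proof -
    define a where "a i = \<epsilon> * (1/2) ^ Suc i" for i
    define \<eta> where "\<eta> i = a i powr (1 / d)" for i
    have eps_i: "0 < a i" "a i < 1" for i
    proof -
      show "0 < a i" using \<epsilon> unfolding a_def by simp
      have "(1/2::real) ^ Suc i \<le> 1" by (rule power_le_one) auto
      then have "\<epsilon> * (1/2) ^ Suc i \<le> 1/2 * 1" using \<epsilon> by (intro mult_mono) auto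
      then show "a i < 1" unfolding a_def by simp
    qed
    have eta: "0 < \<eta> i" "\<eta> i < 1" "\<eta> i powr d = a i" for i
    proof -
      show "0 < \<eta> i" using eps_i[of i] unfolding \<eta>_def by simp
      have "a i powr (1/d) < 1 powr (1/d)" using eps_i[of i] dpos by (intro powr_less_mono2) auto
      then show "\<eta> i < 1" unfolding \<eta>_def by simp
      show "\<eta> i powr d = a i" unfolding \<eta>_def using eps_i[of i] dpos
        by (simp add: powr_powr)
    qed
    define L where "L i = max (diameter (U i)) (\<eta> i)" for i
    have L: "0 < L i" "L i < 1" "diameter (U i) \<le> L i" for i
      using eta[of i] props[of i] unfolding L_def by auto
    have Lp: "L i powr d \<le> diameter (U i) powr d + a i" for i
    proof (cases "diameter (U i) \<le> \<eta> i")
      case True then show ?thesis using eta[of i] eps_i[of i] by (simp add: L_def max_def)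
    next
      case False then show ?thesis using eta[of i] eps_i[of i] by (simp add: L_def max_def)
    qed
    have "\<forall>i. \<exists>C \<in> sets \<mu>. {w\<in>\<Omega>. pi_map p w \<in> U i} \<subseteq> C \<and> emeasure \<mu> C \<le> ennreal (K * L i powr d)"
      using cov props L unfolding K_def by blast
    then obtain C where C: "\<And>i. C i \<in> sets \<mu>" "\<And>i. {w\<in>\<Omega>. pi_map p w \<in> U i} \<subseteq> C i"
      "\<And>i. emeasure \<mu> (C i) \<le> ennreal (K * L i powr d)" by metis
    have "UNIV \<subseteq> (\<Union>i. C i) \<union> (UNIV - \<Omega>)"
    proof
      fix w :: "nat \<Rightarrow> nat" show "w \<in> (\<Union>i. C i) \<union> (UNIV - \<Omega>)"
      proof (cases "w \<in> \<Omega>")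
        case True
        then have "pi_map p w \<in> Pi_set p n" by (simp add: Pi_set_eq)
        then obtain i where "pi_map p w \<in> U i" using cover by blast
        then show ?thesis using C(2)[of i] True by blast
      qed simp
    qed
    have Om: "UNIV - \<Omega> \<in> sets \<mu>"
    proof -
      have "\<Omega> = (\<Inter>j. {v. v j \<in> {1..n}})" by (auto simp: \<Omega>_def)
      moreover have "{v. v j \<in> {1..n}} \<in> sets \<mu>" for j
      proof -
        have "{v. v j \<in> {1..n}} = prod_emb UNIV (\<lambda>_. measure_pmf Q) {j} (PiE {j} (\<lambda>_. {1..n}))"
          by (auto simp: prod_emb_iff restrict_PiE_iff)
        then show ?thesis unfolding \<mu>_def by (simp add: sets_PiM_I)
      qed
      ultimately have "\<Omega> \<in> sets \<mu>" by auto
      then show ?thesis using sets.compl_sets[of \<Omega> \<mu>] by simp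
    qed
    have "1 = emeasure \<mu> UNIV" using mu_UNIV by simp
    also have "\<dots> \<le> emeasure \<mu> ((\<Union>i. C i) \<union> (UNIV - \<Omega>))"
      using \<open>UNIV \<subseteq> _\<close> C(1) Om by (intro emeasure_mono) auto
    also have "\<dots> \<le> emeasure \<mu> (\<Union>i. C i) + emeasure \<mu> (UNIV - \<Omega>)"
      using C(1) Om by (intro emeasure_subadditive) auto
    also have "\<dots> = emeasure \<mu> (\<Union>i. C i)" using mu_bad by simp
    also have "\<dots> \<le> (\<Sum>i. emeasure \<mu> (C i))"
      using C(1) by (intro emeasure_subadditive_countably) auto
    also have "\<dots> \<le> (\<Sum>i. ennreal K * ennreal (diameter (U i) powr d) + ennreal (K * (a i)))"
    proof (intro suminf_le summableI)
      fix i
      have "emeasure \<mu> (C i) \<le> ennreal (K * L i powr d)" by (rule C(3))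
      also have "\<dots> \<le> ennreal (K * (diameter (U i) powr d) + K * (a i))"
        using Lp[of i] K by (intro ennreal_leI) (simp add: distrib_left[symmetric])
      also have "\<dots> = ennreal K * ennreal (diameter (U i) powr d) + ennreal (K * (a i))"
        using K eps_i[of i] by (simp add: ennreal_plus ennreal_mult)
      finally show "emeasure \<mu> (C i) \<le> ennreal K * ennreal (diameter (U i) powr d) + ennreal (K * (a i))" .
    qed
    also have "\<dots> = ennreal K * \<Sigma> + (\<Sum>i. ennreal (K * (a i)))"
      unfolding \<Sigma>_def by (subst suminf_add[symmetric]) auto
    also have "(\<Sum>i. ennreal (K * (a i))) = ennreal (K * \<epsilon>)"
    proof -
      have "(\<lambda>i. K * (a i)) sums (K * (\<epsilon> * 1))"
        unfolding a_def by (intro sums_mult power_half_series)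
      moreover have "\<And>i. 0 \<le> K * a i" using K eps_i by (simp add: less_imp_le)
      ultimately show ?thesis using K \<epsilon> by (subst suminf_ennreal_eq) auto
    qed
    finally show ?thesis .
  qed
  have "1 \<le> ennreal K * \<Sigma>"
  proof (rule ennreal_le_epsilon)
    fix e :: real assume e: "0 < e"
    define \<epsilon> where "\<epsilon> = min (e / K) (1/2)"
    have "0 < \<epsilon>" "\<epsilon> \<le> 1/2" using e K unfolding \<epsilon>_def by (simp, linarith)
    then have "1 \<le> ennreal K * \<Sigma> + ennreal (K * \<epsilon>)" by (rule main)
    also have "K * \<epsilon> \<le> e" using K e by (simp add: \<epsilon>_def min_def field_simps)
    then have "ennreal (K * \<epsilon>) \<le> ennreal e" by (rule ennreal_leI)
    then have "ennreal K * \<Sigma> + ennreal (K * \<epsilon>) \<le> ennreal K * \<Sigma> + ennreal e" by (rule add_left_mono)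
    finally show "1 \<le> ennreal K * \<Sigma> + ennreal e" .
  qed
  then have "ennreal (1 / K) * 1 \<le> ennreal (1 / K) * (ennreal K * \<Sigma>)" by (rule mult_left_mono) simp
  also have "\<dots> = \<Sigma>" using K by (simp add: ennreal_mult[symmetric] mult.assoc[symmetric])
  finally show ?thesis unfolding \<Sigma>_def K_def by simp
qed

end


context dsetting begin

lemma H_zero: "d < s \<Longrightarrow> hausdorff_measure s (Pi_set p n) = 0"
proof -
  assume s: "d < s"
  have "(\<Sum>i=1..n. p i powr s) < (\<Sum>i=1..n. p i powr d)"
    using n1 by (intro sum_strict_mono powr_less_mono' pos p_lt1 s) auto
  then have r: "(\<Sum>i=1..n. p i powr s) < 1" using deq by simp
  show ?thesis unfolding hausdorff_measure_def using upper[OF r] by simp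
qed

lemma H_pos: "0 \<le> s \<Longrightarrow> s \<le> d \<Longrightarrow> hausdorff_measure s (Pi_set p n) \<noteq> 0"
proof -
  assume s: "0 \<le> s" "s \<le> d"
  have "ennreal (\<rho> / 4) \<le> hausdorff_approx s (1/2) (Pi_set p n)"
    unfolding hausdorff_approx_def
  proof (rule INF_greatest)
    fix U :: "nat \<Rightarrow> real set" assume U: "U \<in> {U. Pi_set p n \<subseteq> (\<Union>i. U i) \<and> (\<forall>i. bounded (U i) \<and> diameter (U i) \<le> 1/2)}"
    then have "ennreal (\<rho> / 4) \<le> (\<Sum>i. ennreal (diameter (U i) powr d))" by (intro lower) auto
    also have "\<dots> \<le> (\<Sum>i. ennreal (diameter (U i) powr s))"
    proof (intro suminf_le summableI ennreal_leI)
      fix i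
      have "0 \<le> diameter (U i)" by (rule diameter_ge_0) (use U in auto)
      moreover have "diameter (U i) \<le> 1/2" using U by blast
      then have "diameter (U i) \<le> 1" by simp
      ultimately show "diameter (U i) powr d \<le> diameter (U i) powr s"
        using s by (intro powr_mono') auto
    qed
    finally show "ennreal (\<rho> / 4) \<le> (\<Sum>i. ennreal (diameter (U i) powr s))" .
  qed
  also have "\<dots> \<le> hausdorff_measure s (Pi_set p n)"
    unfolding hausdorff_measure_def by (rule SUP_upper) auto
  finally have "ennreal (\<rho> / 4) \<le> hausdorff_measure s (Pi_set p n)" .
  moreover have "0 < ennreal (\<rho> / 4)" using rho_pos by simp
  ultimately show ?thesis by auto
qed

theorem dim: "hausdorff_dim (Pi_set p n) = d"
proof -
  have "{s. 0 \<le> s \<and> hausdorff_measure s (Pi_set p n) = 0} = {d<..}"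
  proof (intro set_eqI iffI)
    fix s assume "s \<in> {s. 0 \<le> s \<and> hausdorff_measure s (Pi_set p n) = 0}"
    then show "s \<in> {d<..}" using H_pos by force
  next
    fix s assume "s \<in> {d<..}"
    then show "s \<in> {s. 0 \<le> s \<and> hausdorff_measure s (Pi_set p n) = 0}" using H_zero dpos by auto
  qed
  then show ?thesis unfolding hausdorff_dim_def by simp
qed

end


definition GG :: "nat \<Rightarrow> real \<Rightarrow> real \<Rightarrow> real" where
  "GG n q x = (\<Sum>i=1..n. geom q i powr x)"

lemma geom_pos: "0 < q \<Longrightarrow> q < 1 \<Longrightarrow> 0 < geom q i"
  by (simp add: geom_def)
lemma geom_le: "0 \<le> q \<Longrightarrow> q \<le> 1 \<Longrightarrow> geom q i \<le> 1 - q"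
proof -
  assume q: "0 \<le> q" "q \<le> 1"
  have "q ^ (i - 1) \<le> 1" using q by (simp add: power_le_one)
  then show ?thesis unfolding geom_def using q mult_left_mono[of "q ^ (i - 1)" 1 "1 - q"] by simp
qed
lemma geom_nonneg: "0 \<le> q \<Longrightarrow> q \<le> 1 \<Longrightarrow> 0 \<le> geom q i"
  by (simp add: geom_def)

lemma sum_geom: "(\<Sum>i=1..n. geom q i) = 1 - q ^ n"
proof (induction n)
  case 0 then show ?case by simp
next
  case (Suc n) then show ?case by (simp add: geom_def algebra_simps)
qed

lemma geom_setting: "0 < q \<Longrightarrow> q < 1 \<Longrightarrow> 1 \<le> n \<Longrightarrow> setting (geom q) n"
proof
  assume q: "0 < q" "q < 1" and n: "1 \<le> n"
  show "\<And>i. i \<in> {1..n} \<Longrightarrow> 0 < geom q i" using q by (simp add: geom_pos)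
  have "0 < q ^ n" using q by simp
  then show "(\<Sum>i=1..n. geom q i) < 1" using sum_geom[where q=q and n=n] by linarith
qed

lemma GG_dec:
  assumes q: "0 < q" "q < 1" and n: "1 \<le> n" and xy: "x < y"
  shows "GG n q y < GG n q x"
proof -
  have "\<And>i. i \<in> {1..n} \<Longrightarrow> geom q i < 1"
    using geom_le[of q] q by (smt (verit))
  then show ?thesis unfolding GG_def
    using n q xy by (intro sum_strict_mono powr_less_mono' geom_pos) auto
qed

lemma geom_ne: "0 < q \<Longrightarrow> q < 1 \<Longrightarrow> geom q i \<noteq> 0"
  using geom_pos[of q i] by simp

lemma GG_0: "0 < q \<Longrightarrow> q < 1 \<Longrightarrow> GG n q 0 = n"
  unfolding GG_def using geom_ne[of q] by simp

lemma GG_1: "0 < q \<Longrightarrow> q < 1 \<Longrightarrow> GG n q 1 = 1 - q ^ n"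
proof -
  assume q: "0 < q" "q < 1"
  have "GG n q 1 = (\<Sum>i=1..n. geom q i)" unfolding GG_def
    using geom_pos[OF q] by (intro sum.cong refl) (simp add: less_imp_le)
  then show ?thesis using sum_geom[where q=q and n=n] by simp
qed

lemma GG_cont: "0 < q \<Longrightarrow> q < 1 \<Longrightarrow> continuous_on A (GG n q)"
  unfolding GG_def using geom_ne[of q] by (intro continuous_intros) auto

lemma root_ex:
  assumes q: "0 < q" "q < 1" and n: "2 \<le> n"
  shows "\<exists>d. 0 < d \<and> GG n q d = 1"
proof -
  have "GG n q 1 \<le> 1" "1 \<le> GG n q 0" using GG_0 GG_1 q n by auto
  then obtain d where d: "0 \<le> d" "d \<le> 1" "GG n q d = 1"
    using IVT2'[of "GG n q" 1 1 0] GG_cont[OF q] by auto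
  have "d \<noteq> 0" using d GG_0[OF q, of n] n by auto
  then have "0 < d" using d by simp
  then show ?thesis using d by blast
qed

lemma root_unique:
  assumes q: "0 < q" "q < 1" and n: "1 \<le> n" and x: "GG n q x = 1" and y: "GG n q y = 1"
  shows "x = y"
  using GG_dec[OF q n, of x y] GG_dec[OF q n, of y x] x y by (cases x y rule: linorder_cases) auto

lemma F_iff:
  assumes q: "0 < q" "q < 1" and n: "2 \<le> n"
  shows "((1 - q powr (d * real n)) * (1 - q) powr d / (1 - q powr d) = 1) \<longleftrightarrow> GG n q d = 1"
proof (cases "d = 0")
  case True
  then show ?thesis using GG_0[OF q, of n] n q by simp
next
  case False
  define y where "y = q powr d"
  have y1: "y \<noteq> 1" unfolding y_def using q False
    by (metis powr_eq_0_iff powr_zero_eq_one powr_inj less_irrefl zero_less_one)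
  have yn: "q powr (d * real n) = y ^ n"
  proof -
    have "q powr (d * real n) = (q powr d) powr real n" by (simp add: powr_powr)
    also have "\<dots> = (q powr d) ^ n" using q by (intro powr_realpow) simp
    finally show ?thesis by (simp add: y_def)
  qed
  have "GG n q d = (\<Sum>i=1..n. (1 - q) powr d * y ^ (i - 1))"
    unfolding GG_def geom_def y_def using q
    by (intro sum.cong refl) (simp add: powr_mult powr_realpow[symmetric] powr_powr mult.commute)
  also have "\<dots> = (1 - q) powr d * (\<Sum>i=1..n. y ^ (i - 1))" by (simp add: sum_distrib_left)
  also have "(\<Sum>i=1..n. y ^ (i - 1)) = (\<Sum>i<n. y ^ i)"
  proof -
    have "(\<Sum>i=1..n. y ^ (i - 1)) = (\<Sum>i\<in>Suc ` {..<n}. y ^ (i - 1))"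
      by (simp add: image_Suc_lessThan)
    also have "\<dots> = (\<Sum>i<n. y ^ i)" by (subst sum.reindex) auto
    finally show ?thesis .
  qed
  also have "\<dots> = (1 - y ^ n) / (1 - y)" using y1 by (simp add: sum_gp_strict)
  finally have "GG n q d = (1 - q powr (d * real n)) * (1 - q) powr d / (1 - q powr d)"
    using yn by (simp add: y_def)
  then show ?thesis by simp
qed



lemma dim_geom:
  assumes q: "0 < q" "q < 1" and n: "2 \<le> n" and d: "0 < d" "GG n q d = 1"
  shows "hausdorff_dim (Pi_set (geom q) n) = d"
proof -
  have "dsetting (geom q) n d"
    using geom_setting[OF q, of n] n d
    by (intro dsetting.intro dsetting_axioms.intro) (auto simp: GG_def)
  then show ?thesis by (rule dsetting.dim)
qed

lemma GG_cont_q: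
  assumes t: "0 < t"
  shows "continuous_on {0..1} (\<lambda>q. GG n q t)"
  unfolding GG_def geom_def
  by (intro continuous_on_sum continuous_on_powr' continuous_intros) (use t in auto)

lemma surj_root:
  assumes t: "0 < t" "t < 1" and n: "2 \<le> n"
  shows "\<exists>q. 0 < q \<and> q < 1 \<and> GG n q t = 1"
proof -
  define a where "a = (1/4::real) powr (1 / (1 - t))"
  have a0: "0 < a" unfolding a_def by simp
  have a14: "a \<le> 1/4"
  proof -
    have "1 \<le> 1 / (1 - t)" using t by simp
    then have "(1/4::real) powr (1 / (1 - t)) \<le> (1/4) powr 1" by (intro powr_mono') auto
    then show ?thesis unfolding a_def by simp
  qed
  have apt: "a powr t = 4 * a"
  proof -
    have "a powr (t - 1) = (1/4) powr ((1 / (1 - t)) * (t - 1))" unfolding a_def by (simp add: powr_powr)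
    also have "(1 / (1 - t)) * (t - 1) = -1" using t by (simp add: field_simps)
    finally have "a powr (t - 1) = 4" by (simp add: powr_minus_divide)
    moreover have "a powr t = a powr (t - 1) * a powr 1" using powr_add[of a "t - 1" 1] by simp
    ultimately show ?thesis using a0 by simp
  qed
  have ha: "1 \<le> GG n a t"
  proof -
    have "geom a 1 powr t + geom a 2 powr t = (\<Sum>i\<in>{1,2}. geom a i powr t)" by simp
    also have "\<dots> \<le> GG n a t" unfolding GG_def using n by (intro sum_mono2) auto
    finally have s: "geom a 1 powr t + geom a 2 powr t \<le> GG n a t" .
    have g1: "geom a 1 = 1 - a" "geom a 2 = (1 - a) * a" by (simp_all add: geom_def)
    have "(1 - a) powr 1 \<le> (1 - a) powr t" using t a0 a14 by (intro powr_mono') auto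
    then have e1: "1 - a \<le> (1 - a) powr t" using a14 by simp
    have "((1 - a) * a) powr t = (1 - a) powr t * (4 * a)" using apt by (simp add: powr_mult)
    also have "\<dots> \<ge> (1 - a) * (4 * a)" using e1 a0 by (intro mult_right_mono) auto
    finally have e2: "(1 - a) * (4 * a) \<le> ((1 - a) * a) powr t" .
    have "1 \<le> (1 - a) + (1 - a) * (4 * a)" using a0 a14 by (simp add: algebra_simps)
    also have "\<dots> \<le> geom a 1 powr t + geom a 2 powr t" using e1 e2 g1 by simp
    finally show ?thesis using s by simp
  qed
  define c where "c = (1 / real n) powr (1 / t)"
  define b where "b = 1 - c"
  have c0: "0 < c" unfolding c_def using n by simp
  have c1: "c < 1"
  proof -
    have "(1 / real n) powr (1 / t) < 1 powr (1 / t)" using n t by (intro powr_less_mono2) auto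
    then show ?thesis unfolding c_def by simp
  qed
  have hb: "GG n b t \<le> 1"
  proof -
    have "geom b i powr t \<le> 1 / real n" for i
    proof -
      have "geom b i powr t \<le> (1 - b) powr t"
        using geom_le[of b i] geom_nonneg[of b i] c0 c1 t by (intro powr_mono2) (auto simp: b_def)
      also have "(1 - b) powr t = 1 / real n" unfolding b_def c_def using t n by (simp add: powr_powr)
      finally show ?thesis .
    qed
    then have "GG n b t \<le> of_nat (card {1..n}) * (1 / real n)" unfolding GG_def by (intro sum_bounded_above) auto
    then show ?thesis using n by simp
  qed
  have b0: "0 < b" "b < 1" using c0 c1 by (auto simp: b_def)
  show ?thesis
  proof (cases "a \<le> b")
    case True
    have "continuous_on {a..b} (\<lambda>q. GG n q t)"
      by (rule continuous_on_subset[OF GG_cont_q[OF t(1)]]) (use a0 b0 in auto)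
    then obtain q where "a \<le> q" "q \<le> b" "GG n q t = 1"
      using IVT2'[of "\<lambda>q. GG n q t" b 1 a] hb ha True by auto
    then show ?thesis using a0 b0 by (intro exI[of _ q]) auto
  next
    case False
    have "continuous_on {b..a} (\<lambda>q. GG n q t)"
      by (rule continuous_on_subset[OF GG_cont_q[OF t(1)]]) (use a0 b0 a14 in auto)
    then obtain q where "b \<le> q" "q \<le> a" "GG n q t = 1"
      using IVT'[of "\<lambda>q. GG n q t" b 1 a] hb ha False by auto
    then show ?thesis using a0 b0 a14 by (intro exI[of _ q]) auto
  qed
qed

theorem mainTheorem5:
  fixes n :: nat
  assumes "n \<ge> 2"
  shows "(\<forall>p::real. 0 < p \<and> p < 1 \<longrightarrow>
            (let F = (\<lambda>d::real. (1 - p powr (d * real n)) * (1 - p) powr d / (1 - p powr d) = 1)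
             in F (hausdorff_dim (Pi_set (geom p) n)) \<and>
                (\<forall>d. F d \<longrightarrow> d = hausdorff_dim (Pi_set (geom p) n))))
       \<and> (\<forall>t::real. 0 < t \<and> t < 1 \<longrightarrow>
            (\<exists>p::real. 0 < p \<and> p < 1 \<and> hausdorff_dim (Pi_set (geom p) n) = t))"
proof (intro conjI allI impI)
  fix q :: real assume q: "0 < q \<and> q < 1"
  then have q1: "0 < q" "q < 1" by auto
  obtain d0 where d0: "0 < d0" "GG n q d0 = 1" using root_ex[OF q1 assms] by blast
  have dim: "hausdorff_dim (Pi_set (geom q) n) = d0" by (rule dim_geom[OF q1 assms d0])
  show "let F = (\<lambda>d::real. (1 - q powr (d * real n)) * (1 - q) powr d / (1 - q powr d) = 1)
             in F (hausdorff_dim (Pi_set (geom q) n)) \<and>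
                (\<forall>d. F d \<longrightarrow> d = hausdorff_dim (Pi_set (geom q) n))"
    unfolding Let_def F_iff[OF q1 assms] dim
    using d0 root_unique[OF q1, of n] assms by auto
next
  fix t :: real assume t: "0 < t \<and> t < 1"
  then obtain q where q: "0 < q" "q < 1" "GG n q t = 1" using surj_root[of t n] assms by auto
  then show "\<exists>p::real. 0 < p \<and> p < 1 \<and> hausdorff_dim (Pi_set (geom p) n) = t"
    using dim_geom[OF q(1,2) assms _ q(3)] t by auto
qed


end
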